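(* Consider $N$ sub-operators $\mathcal{R}^{[i]}$, $i\in\mathcal{V}=\{1,\dots,N\}$, each with $\mathcal{L}_2$-gain at most $\gamma^{[i]}>0$ (dissipative with respect to the supply $s^{[i]}$ in the context), interconnected via matrices $M_{vz},M_{vw},M_{uz}$ satisfying Assumption 2, and let $\gamma_R>0$. For each $i$, let $b^{[i]}\in\mathbb{R}$ be arbitrary and set $$\alpha^{[i]}=h^{[i]}+\max_{j\in\mathcal{A}_{z_i}}\Big(\sum_{k=1}^{q}|m_{kj}|\Big)+\big(b^{[i]}\big)^2,$$ assumed to be $>0$. Choose $$\gamma^{[i]}=\begin{cases}\left(\dfrac{1}{\alpha^{[i]}}\min\left\{\dfrac{\gamma_R^2}{\max_{j\in\mathcal{A}^1_{u_i}}\big(\sum_{k=1}^r|m_{jk}|\big)\gamma_R^2+1},\ \dfrac{1}{\max_{j\in\mathcal{A}^0_{u_i}}\big(\sum_{k=1}^r|m_{jk}|\big)}\right\}\right)^{1/2}, & i\in\mathcal{V}^1,\\[3ex] \left(\dfrac{1}{\alpha^{[i]}\max_{j\in\mathcal{A}^0_{u_i}}\big(\sum_{k=1}^r|m_{jk}|\big)}\right)^{1/2}, & i\notin\mathcal{V}^1,\end{cases}$$ where, for $i\in\mathcal{V}^1$ with $\mathcal{A}^0_{u_i}=\emptyset$ or with $\max_{j\in\mathcal{A}^0_{u_i}}\sum_k|m_{jk}|=0$, the second entry of the minimum is omitted, and for $i\notin\mathcal{V}^1$ it is assumed that $\max_{j\in\mathcal{A}^0_{u_i}}\sum_k|m_{jk}|>0$.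 Then, with these $\alpha^{[i]}$ and $\gamma^{[i]}$, the matrix inequality $$\begin{bmatrix} M_{vz} & M_{vw}\\ I & 0\\ 0 & I\\ M_{uz} & 0\end{bmatrix}^{\top}\begin{bmatrix}\mathrm{blkdiag}(\Pi_{N,v},-\Pi_{N,z}) & 0\\ 0 & -S\end{bmatrix}\begin{bmatrix} M_{vz} & M_{vw}\\ I & 0\\ 0 & I\\ M_{uz} & 0\end{bmatrix}\preceq 0$$ holds, for every choice of the free parameters $b^{[i]}$ (and of any further parameters of the sub-operators that do not affect their gain bound $\gamma^{[i]}$). Consequently the interconnected operator $\mathcal{R}:\widehat{\mathbf{w}}\mapsto\mathbf{u}$ (assumed well posed) lies in $\mathcal{L}_2$, with $\mathcal{L}_2$-gain at most $\gamma_R$.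
   Context: Sub-operators: $\mathcal{R}^{[i]}:l^{q_i}\to l^{r_i}$ with state-space form $\xi^{[i]}_{t+1}=\rho^{[i]}(\xi^{[i]}_t,v^{[i]}_t)$, $z^{[i]}_t=\chi^{[i]}(\xi^{[i]}_t,v^{[i]}_t)$, having $\mathcal{L}_2$-gain at most $\gamma^{[i]}$ in the sense that there is a nonnegative storage function $V^{[i]}$ with $V^{[i]}(\xi^{[i]}_{t+1})-V^{[i]}(\xi^{[i]}_t)\le \gamma^{[i]2}|v^{[i]}_t|^2-|z^{[i]}_t|^2$ for all $t$. (In the paper these are Recurrent Equilibrium Networks, whose parametrization guarantees gain at most any prescribed $\gamma^{[i]}$ for all values of their parameters.) Stacked signals: $v=\mathrm{col}(v^{[1]},\dots,v^{[N]})\in\mathbb{R}^q$, $z=\mathrm{col}(z^{[1]},\dots,z^{[N]})\in\mathbb{R}^r$, $\widehat{w}\in\mathbb{R}^n$, $u\in\mathbb{R}^m$, interconnected by $v=M_{vz}z+M_{vw}\widehat{w}$, $u=M_{uz}z$, with $M_{vz}\in\mathbb{R}^{q\times r}$, $M_{vw}\in\mathbb{R}^{q\times n}$, $M_{uz}\in\mathbb{R}^{m\times r}$. An operator is in $\mathcal{L}_2$ if it is causal and maps square-summable sequences to square-summable sequences. Assumption 2: (a) there is a permutation matrix $C\in\{0,1\}^{q\times q}$ with $CM_{vw}=\begin{bmatrix}I_n\\ 0_{(q-n)\times n}\end{bmatrix}$; (b) $M_{uz}^\top M_{uz}=H=\mathrm{diag}(h)$ for some $h\in\mathbb{R}^r$.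 Notation: $m_{jk}$ denotes the $(j,k)$ entry of $M_{vz}$. $\mathcal{A}_{u_i}\subseteq\{1,\dots,q\}$ is the set of indices of the components of $v$ forming $v^{[i]}$; $\mathcal{A}_{z_i}\subseteq\{1,\dots,r\}$ is the set of indices of the components of $z$ forming $z^{[i]}$. $\mathcal{A}^1_{u_i}=\{k\in\mathcal{A}_{u_i}:(M_{vw}\mathbf{1})_k=1\}$ and $\mathcal{A}^0_{u_i}=\{k\in\mathcal{A}_{u_i}:(M_{vw}\mathbf{1})_k=0\}$, where $\mathbf{1}$ is the all-ones vector. $\mathcal{V}^1=\{i\in\mathcal{V}:\mathcal{A}^1_{u_i}\neq\emptyset\}$ (the out-connected sub-operators). $h^{[i]}=\max_{j\in\mathcal{A}_{z_i}}h_j$. $S=\mathrm{blkdiag}(\gamma_R^2I_n,-I_m)$, $\Pi_{N,v}=\mathrm{blkdiag}(\alpha^{[1]}\gamma^{[1]2}I_{q_1},\dots,\alpha^{[N]}\gamma^{[N]2}I_{q_N})$, $\Pi_{N,z}=\mathrm{blkdiag}(\alpha^{[1]}I_{r_1},\dots,\alpha^{[N]}I_{r_N})$. *)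

theory Defs
  imports Complex_Main "Jordan_Normal_Form.Matrix" "HOL-Combinatorics.Permutations"
begin

text \<open>Conventions: components of v (dimension q) and z (dimension r) are indexed from 0.
  Sub-operators are indexed by i < N. The partition of the components of v (resp. z)
  among the sub-operators is given by functions bu (resp. bz): component k of v belongs
  to v^[bu k], component j of z belongs to z^[bz j].\<close>

definition Au :: "(nat \<Rightarrow> nat) \<Rightarrow> nat \<Rightarrow> nat \<Rightarrow> nat set" where
  "Au bu q i = {k. k < q \<and> bu k = i}"

definition Az :: "(nat \<Rightarrow> nat) \<Rightarrow> nat \<Rightarrow> nat \<Rightarrow> nat set" where
  "Az bz r i = {j. j < r \<and> bz j = i}"

definition A1 :: "real mat \<Rightarrow> (nat \<Rightarrow> nat) \<Rightarrow> nat \<Rightarrow> nat set" where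
  "A1 Mvw bu i = {k \<in> Au bu (dim_row Mvw) i. (\<Sum>l<dim_col Mvw. Mvw $$ (k,l)) = 1}"

definition A0 :: "real mat \<Rightarrow> (nat \<Rightarrow> nat) \<Rightarrow> nat \<Rightarrow> nat set" where
  "A0 Mvw bu i = {k \<in> Au bu (dim_row Mvw) i. (\<Sum>l<dim_col Mvw. Mvw $$ (k,l)) = 0}"

definition rowsum :: "real mat \<Rightarrow> nat \<Rightarrow> real" where
  "rowsum M j = (\<Sum>k<dim_col M. \<bar>M $$ (j,k)\<bar>)"

definition colsum :: "real mat \<Rightarrow> nat \<Rightarrow> real" where
  "colsum M j = (\<Sum>k<dim_row M. \<bar>M $$ (k,j)\<bar>)"

definition alpha :: "real mat \<Rightarrow> (nat \<Rightarrow> real) \<Rightarrow> (nat \<Rightarrow> nat) \<Rightarrow> (nat \<Rightarrow> real) \<Rightarrow> nat \<Rightarrow> real" where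
  "alpha Mvz h bz b i =
     Max (h ` Az bz (dim_col Mvz) i) + Max (colsum Mvz ` Az bz (dim_col Mvz) i) + (b i)\<^sup>2"

definition gamma :: "real \<Rightarrow> real mat \<Rightarrow> real mat \<Rightarrow> (nat \<Rightarrow> nat) \<Rightarrow> real \<Rightarrow> nat \<Rightarrow> real" where
  "gamma gR Mvz Mvw bu a i =
     (if A1 Mvw bu i \<noteq> {} then
        (let R1 = Max (rowsum Mvz ` A1 Mvw bu i);
             e1 = gR\<^sup>2 / (R1 * gR\<^sup>2 + 1)
         in if A0 Mvw bu i = {} \<or> Max (rowsum Mvz ` A0 Mvw bu i) = 0
            then sqrt (e1 / a)
            else sqrt (min e1 (1 / Max (rowsum Mvz ` A0 Mvw bu i)) / a))
      else sqrt (1 / (a * Max (rowsum Mvz ` A0 Mvw bu i))))"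

definition perm_mat :: "real mat \<Rightarrow> nat \<Rightarrow> bool" where
  "perm_mat C q \<longleftrightarrow> C \<in> carrier_mat q q \<and>
     (\<exists>\<pi>. \<pi> permutes {..<q} \<and> (\<forall>a<q. \<forall>c<q. C $$ (a,c) = (if c = \<pi> a then 1 else 0)))"

definition diag_mat :: "nat \<Rightarrow> (nat \<Rightarrow> real) \<Rightarrow> real mat" where
  "diag_mat d dg = mat d d (\<lambda>(a,c). if a = c then dg a else 0)"

text \<open>The outer factor [Mvz Mvw; I 0; 0 I; Muz 0] of size (q+r+n+m) x (r+n).\<close>
definition outer_mat :: "real mat \<Rightarrow> real mat \<Rightarrow> real mat \<Rightarrow> real mat" where
  "outer_mat Mvz Mvw Muz =
    (let q = dim_row Mvz; r = dim_col Mvz; n = dim_col Mvw; m = dim_row Muz in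
     mat (q+r+n+m) (r+n) (\<lambda>(a,c).
       if a < q then (if c < r then Mvz $$ (a,c) else Mvw $$ (a, c - r))
       else if a < q + r then (if c = a - q then 1 else 0)
       else if a < q + r + n then (if c \<ge> r \<and> c - r = a - q - r then 1 else 0)
       else (if c < r then Muz $$ (a - q - r - n, c) else 0)))"

text \<open>The inner matrix blkdiag(Pi_{N,v}, -Pi_{N,z}, -S), S = blkdiag(gR^2 I_n, -I_m).\<close>
definition inner_mat :: "nat \<Rightarrow> nat \<Rightarrow> nat \<Rightarrow> nat \<Rightarrow> (nat \<Rightarrow> nat) \<Rightarrow> (nat \<Rightarrow> nat)
    \<Rightarrow> (nat \<Rightarrow> real) \<Rightarrow> (nat \<Rightarrow> real) \<Rightarrow> real \<Rightarrow> real mat" where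
  "inner_mat q r n m bu bz al ga gR = diag_mat (q+r+n+m) (\<lambda>a.
       if a < q then al (bu a) * (ga (bu a))\<^sup>2
       else if a < q + r then - al (bz (a - q))
       else if a < q + r + n then - gR\<^sup>2
       else 1)"

definition neg_semidef :: "real mat \<Rightarrow> bool" where
  "neg_semidef A \<longleftrightarrow> A \<in> carrier_mat (dim_row A) (dim_row A) \<and>
     (\<forall>x \<in> carrier_vec (dim_row A). x \<bullet> (A *\<^sub>v x) \<le> 0)"

text \<open>Input of sub-operator i: the components of v belonging to v^[i]
  (represented as a q-vector vanishing outside A_{u_i}).\<close>
definition mask :: "(nat \<Rightarrow> nat) \<Rightarrow> nat \<Rightarrow> real vec \<Rightarrow> real vec" where
  "mask bu i v = vec (dim_vec v) (\<lambda>k. if bu k = i then v $ k else 0)"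

definition is_traj :: "nat \<Rightarrow> real mat \<Rightarrow> real mat \<Rightarrow> real mat \<Rightarrow> (nat \<Rightarrow> nat) \<Rightarrow> (nat \<Rightarrow> nat)
   \<Rightarrow> (nat \<Rightarrow> 'x \<Rightarrow> real vec \<Rightarrow> 'x) \<Rightarrow> (nat \<Rightarrow> 'x \<Rightarrow> real vec \<Rightarrow> real vec)
   \<Rightarrow> (nat \<Rightarrow> nat \<Rightarrow> 'x) \<Rightarrow> (nat \<Rightarrow> real vec) \<Rightarrow> (nat \<Rightarrow> real vec) \<Rightarrow> (nat \<Rightarrow> real vec)
   \<Rightarrow> (nat \<Rightarrow> real vec) \<Rightarrow> bool" where
  "is_traj N Mvz Mvw Muz bu bz \<rho> \<chi> \<xi> v z w u \<longleftrightarrow>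
     (\<forall>t. v t \<in> carrier_vec (dim_row Mvz) \<and> z t \<in> carrier_vec (dim_col Mvz) \<and>
          w t \<in> carrier_vec (dim_col Mvw) \<and> u t \<in> carrier_vec (dim_row Muz) \<and>
          (\<forall>i<N. \<xi> (Suc t) i = \<rho> i (\<xi> t i) (mask bu i (v t))) \<and>
          (\<forall>j<dim_col Mvz. z t $ j = \<chi> (bz j) (\<xi> t (bz j)) (mask bu (bz j) (v t)) $ j) \<and>
          v t = Mvz *\<^sub>v z t + Mvw *\<^sub>v w t \<and>
          u t = Muz *\<^sub>v z t)"

end

theory Submission
  imports Defs
begin

lemma cs_step:
  fixes A P Q p y :: real
  assumes "A^2 \<le> P * Q" "P \<ge> 0" "Q \<ge> 0" "p \<ge> 0"
  shows "(p * y + A)^2 \<le> (p + P) * (p * y^2 + Q)"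
proof -
  have h1: "4*y^2*A^2 \<le> 4*y^2*(P*Q)" using assms(1) by (simp add: mult_left_mono)
  have e2: "(Q + P*y^2)^2 - 4*y^2*(P*Q) = (Q - P*y^2)^2" by (simp add: power2_eq_square algebra_simps)
  have h2: "4*y^2*(P*Q) \<le> (Q + P*y^2)^2" using e2 zero_le_power2[of "Q - P*y^2"] by linarith
  have e3: "(2*y*A)^2 = 4*y^2*A^2" by (simp add: power2_eq_square)
  have h3: "2*y*A \<le> Q + P*y^2"
    apply (rule power2_le_imp_le)
    using h1 h2 e3 apply linarith
    using assms(2,3) by simp
  have h4: "p*(2*y*A) \<le> p*(Q + P*y^2)" using h3 assms(4) by (rule mult_left_mono)
  have e5: "(p + P) * (p * y^2 + Q) - (p * y + A)^2 = p*(Q + P*y^2) - p*(2*y*A) + (P*Q - A^2)"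
    by (simp add: power2_eq_square algebra_simps)
  show ?thesis using e5 h4 assms(1) by linarith
qed

lemma wcs:
  fixes p y :: "nat \<Rightarrow> real"
  assumes "finite I" "\<forall>i\<in>I. p i \<ge> 0"
  shows "(\<Sum>i\<in>I. p i * y i)^2 \<le> (\<Sum>i\<in>I. p i) * (\<Sum>i\<in>I. p i * (y i)^2)"
  using assms
proof (induction I rule: finite_induct)
  case empty then show ?case by simp
next
  case (insert a F)
  have "(\<Sum>i\<in>insert a F. p i * y i)^2 = (p a * y a + (\<Sum>i\<in>F. p i * y i))^2"
    using insert by simp
  also have "\<dots> \<le> (p a + (\<Sum>i\<in>F. p i)) * (p a * (y a)^2 + (\<Sum>i\<in>F. p i * (y i)^2))"
    apply (rule cs_step)
    using insert by (auto intro!: sum_nonneg)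
  also have "\<dots> = (\<Sum>i\<in>insert a F. p i) * (\<Sum>i\<in>insert a F. p i * (y i)^2)"
    using insert by simp
  finally show ?case .
qed

lemma abs_cs:
  fixes a z :: "nat \<Rightarrow> real"
  assumes "finite I"
  shows "(\<Sum>i\<in>I. a i * z i)^2 \<le> (\<Sum>i\<in>I. \<bar>a i\<bar>) * (\<Sum>i\<in>I. \<bar>a i\<bar> * (z i)^2)"
proof -
  define y where "y i = (if a i \<ge> 0 then z i else - z i)" for i
  have 1: "a i * z i = \<bar>a i\<bar> * y i" for i by (simp add: y_def)
  have 2: "\<bar>a i\<bar> * (y i)^2 = \<bar>a i\<bar> * (z i)^2" for i by (simp add: y_def)
  show ?thesis unfolding 1 2[symmetric] by (rule wcs[OF assms]) auto
qed

lemma row_bound_w: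
  fixes a z :: "nat \<Rightarrow> real" and c g w :: real
  assumes "finite I" "g > 0" "c \<ge> 0" "c * ((\<Sum>i\<in>I. \<bar>a i\<bar>) + 1/g^2) \<le> 1"
  shows "c * ((\<Sum>i\<in>I. a i * z i) + w)^2 \<le> (\<Sum>i\<in>I. \<bar>a i\<bar> * (z i)^2) + g^2 * w^2"
proof -
  let ?R = "\<Sum>i\<in>I. \<bar>a i\<bar>" and ?Q = "\<Sum>i\<in>I. \<bar>a i\<bar> * (z i)^2" and ?A = "\<Sum>i\<in>I. a i * z i"
  have "(1/g^2 * (g^2 * w) + ?A)^2 \<le> (1/g^2 + ?R) * (1/g^2 * (g^2*w)^2 + ?Q)"
    by (rule cs_step[OF abs_cs[OF assms(1)]]) (auto intro!: sum_nonneg)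
  moreover have "1/g^2 * (g^2 * w) = w" "1/g^2 * (g^2*w)^2 = g^2 * w^2" using assms(2)
    by (auto simp: power2_eq_square field_simps)
  ultimately have "(?A + w)^2 \<le> (?R + 1/g^2) * (?Q + g^2*w^2)" by (simp add: add.commute)
  hence "c * (?A + w)^2 \<le> c * ((?R + 1/g^2) * (?Q + g^2*w^2))" using assms(3) by (rule mult_left_mono)
  also have "\<dots> \<le> 1 * (?Q + g^2*w^2)"
    unfolding mult.assoc[symmetric] apply (rule mult_right_mono[OF assms(4)])
    by (auto intro!: add_nonneg_nonneg sum_nonneg)
  finally show ?thesis by simp
qed

lemma row_bound_0:
  fixes a z :: "nat \<Rightarrow> real" and c :: real
  assumes "finite I" "c \<ge> 0" "c * (\<Sum>i\<in>I. \<bar>a i\<bar>) \<le> 1"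
  shows "c * (\<Sum>i\<in>I. a i * z i)^2 \<le> (\<Sum>i\<in>I. \<bar>a i\<bar> * (z i)^2)"
proof -
  let ?R = "\<Sum>i\<in>I. \<bar>a i\<bar>" and ?Q = "\<Sum>i\<in>I. \<bar>a i\<bar> * (z i)^2" and ?A = "\<Sum>i\<in>I. a i * z i"
  have "c * ?A^2 \<le> c * (?R * ?Q)" using abs_cs[OF assms(1)] assms(2) by (rule mult_left_mono)
  also have "\<dots> \<le> 1 * ?Q"
    unfolding mult.assoc[symmetric] apply (rule mult_right_mono[OF assms(3)])
    by (auto intro!: sum_nonneg)
  finally show ?thesis by simp
qed

lemma sum_split_add: "(\<Sum>i<a+(b::nat). f i) = (\<Sum>i<a. f i) + (\<Sum>i<b. f (a+i))"
  by (induction b) (simp_all add: add.assoc)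

lemma Mvw_row:
  fixes Mvw :: "real mat"
  assumes "Mvw \<in> carrier_mat q n" "w \<in> carrier_vec n" "k < q"
    "\<forall>k<q. \<forall>l<n. Mvw $$ (k,l) = (if \<sigma> k = l then 1 else 0)"
  shows "(Mvw *\<^sub>v w) $ k = (if \<sigma> k < n then w $ (\<sigma> k) else 0)"
proof -
  have "(Mvw *\<^sub>v w) $ k = (\<Sum>l\<in>{0..<n}. Mvw $$ (k,l) * w $ l)"
    using assms by (simp add: scalar_prod_def)
  also have "\<dots> = (\<Sum>l\<in>{0..<n}. if \<sigma> k = l then w $ l else 0)"
    using assms by (intro sum.cong) auto
  also have "\<dots> = (if \<sigma> k < n then w $ (\<sigma> k) else 0)"
    by (simp add: sum.delta)
  finally show ?thesis .
qed

lemma Mvw_rowsum: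
  fixes Mvw :: "real mat"
  assumes "Mvw \<in> carrier_mat q n" "k < q"
    "\<forall>k<q. \<forall>l<n. Mvw $$ (k,l) = (if \<sigma> k = l then 1 else 0)"
  shows "(\<Sum>l<dim_col Mvw. Mvw $$ (k,l)) = (if \<sigma> k < n then 1 else 0)"
proof -
  have "(\<Sum>l<dim_col Mvw. Mvw $$ (k,l)) = (\<Sum>l<n. if \<sigma> k = l then 1 else 0)"
    using assms by (intro sum.cong) auto
  also have "\<dots> = (if \<sigma> k < n then 1 else 0)" by (simp add: sum.delta)
  finally show ?thesis .
qed

lemma Mvz_row:
  fixes Mvz :: "real mat"
  assumes "Mvz \<in> carrier_mat q r" "z \<in> carrier_vec r" "k < q"
  shows "(Mvz *\<^sub>v z) $ k = (\<Sum>j<r. Mvz $$ (k,j) * z $ j)"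
  using assms by (simp add: scalar_prod_def atLeast0LessThan)

lemma key_sum:
  fixes Mvz Mvw :: "real mat" and c :: "nat \<Rightarrow> real"
  assumes dims: "Mvz \<in> carrier_mat q r" "Mvw \<in> carrier_mat q n"
    and zw: "z \<in> carrier_vec r" "w \<in> carrier_vec n"
    and sig: "\<sigma> permutes {..<q}" "n \<le> q"
    and Wf: "\<forall>k<q. \<forall>l<n. Mvw $$ (k,l) = (if \<sigma> k = l then 1 else 0)"
    and g: "gR > 0"
    and cb: "\<forall>k<q. c k \<ge> 0 \<and> (\<sigma> k < n \<longrightarrow> c k * (rowsum Mvz k + 1/gR^2) \<le> 1)
                      \<and> (\<not> \<sigma> k < n \<longrightarrow> c k * rowsum Mvz k \<le> 1)"
  shows "(\<Sum>k<q. c k * ((Mvz *\<^sub>v z + Mvw *\<^sub>v w) $ k)^2)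
         \<le> (\<Sum>j<r. colsum Mvz j * (z $ j)^2) + gR^2 * (w \<bullet> w)"
proof -
  define f where "f l = (if l < n then gR^2 * (w $ l)^2 else 0)" for l
  have row: "c k * ((Mvz *\<^sub>v z + Mvw *\<^sub>v w) $ k)^2
      \<le> (\<Sum>j<r. \<bar>Mvz $$ (k,j)\<bar> * (z $ j)^2) + f (\<sigma> k)" if k: "k < q" for k
  proof -
    have rs: "rowsum Mvz k = (\<Sum>j<r. \<bar>Mvz $$ (k,j)\<bar>)" using dims by (simp add: rowsum_def)
    have v: "(Mvz *\<^sub>v z + Mvw *\<^sub>v w) $ k = (\<Sum>j<r. Mvz $$ (k,j) * z $ j)
               + (if \<sigma> k < n then w $ (\<sigma> k) else 0)"
      using dims zw k Mvw_row[OF dims(2) zw(2) k Wf] Mvz_row[OF dims(1) zw(1) k] by simp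
    show ?thesis
    proof (cases "\<sigma> k < n")
      case True
      have "c k * ((\<Sum>j<r. Mvz $$ (k,j) * z $ j) + w $ (\<sigma> k))^2
          \<le> (\<Sum>j<r. \<bar>Mvz $$ (k,j)\<bar> * (z $ j)^2) + gR^2 * (w $ (\<sigma> k))^2"
        apply (rule row_bound_w) using cb k True g rs by auto
      then show ?thesis using True v by (simp add: f_def)
    next
      case False
      have "c k * (\<Sum>j<r. Mvz $$ (k,j) * z $ j)^2 \<le> (\<Sum>j<r. \<bar>Mvz $$ (k,j)\<bar> * (z $ j)^2)"
        apply (rule row_bound_0) using cb k False rs by auto
      then show ?thesis using False v by (simp add: f_def)
    qed
  qed
  have "(\<Sum>k<q. c k * ((Mvz *\<^sub>v z + Mvw *\<^sub>v w) $ k)^2)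
      \<le> (\<Sum>k<q. (\<Sum>j<r. \<bar>Mvz $$ (k,j)\<bar> * (z $ j)^2) + f (\<sigma> k))"
    by (rule sum_mono) (use row in auto)
  also have "\<dots> = (\<Sum>k<q. \<Sum>j<r. \<bar>Mvz $$ (k,j)\<bar> * (z $ j)^2) + (\<Sum>k<q. f (\<sigma> k))"
    by (simp add: sum.distrib)
  also have "(\<Sum>k<q. \<Sum>j<r. \<bar>Mvz $$ (k,j)\<bar> * (z $ j)^2) = (\<Sum>j<r. colsum Mvz j * (z $ j)^2)"
    using dims by (subst sum.swap) (simp add: colsum_def sum_distrib_right)
  also have "(\<Sum>k<q. f (\<sigma> k)) = (\<Sum>l<q. f l)"
    by (rule sum.permute[OF sig(1), symmetric, unfolded comp_def])
  also have "(\<Sum>l<q. f l) = (\<Sum>l<n + (q-n). f l)" using sig(2) by simp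
  also have "\<dots> = (\<Sum>l<n. f l)" unfolding sum_split_add by (simp add: f_def)
  also have "\<dots> = gR^2 * (w \<bullet> w)"
    using zw by (simp add: f_def scalar_prod_def sum_distrib_left power2_eq_square atLeast0LessThan)
  finally show ?thesis by simp
qed

lemma rowsum_nn: "rowsum M j \<ge> 0"
  unfolding rowsum_def by (rule sum_nonneg) simp

lemma gamma_bound:
  fixes Mvz Mvw :: "real mat"
  assumes dims: "Mvz \<in> carrier_mat q r" "Mvw \<in> carrier_mat q n"
    and Wf: "\<forall>k<q. \<forall>l<n. Mvw $$ (k,l) = (if \<sigma> k = l then 1 else 0)"
    and k: "k < q" and a: "a > 0" and g: "gR > 0"
    and R0: "A1 Mvw bu (bu k) = {} \<longrightarrow> Max (rowsum Mvz ` A0 Mvw bu (bu k)) > 0"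
  shows "a * (gamma gR Mvz Mvw bu a (bu k))^2 \<ge> 0
     \<and> (\<sigma> k < n \<longrightarrow> a * (gamma gR Mvz Mvw bu a (bu k))^2 * (rowsum Mvz k + 1/gR^2) \<le> 1)
     \<and> (\<not> \<sigma> k < n \<longrightarrow> a * (gamma gR Mvz Mvw bu a (bu k))^2 * rowsum Mvz k \<le> 1)"
proof -
  define i where "i = bu k"
  define c where "c = a * (gamma gR Mvz Mvw bu a i)^2"
  have dW: "dim_row Mvw = q" "dim_col Mvw = n" using dims by auto
  have m1: "k \<in> A1 Mvw bu i \<longleftrightarrow> \<sigma> k < n"
    using Mvw_rowsum[OF dims(2) k Wf] k unfolding A1_def Au_def i_def dW by auto
  have m0: "k \<in> A0 Mvw bu i \<longleftrightarrow> \<not> \<sigma> k < n"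
    using Mvw_rowsum[OF dims(2) k Wf] k unfolding A0_def Au_def i_def dW by auto
  have f1: "finite (A1 Mvw bu i)" unfolding A1_def Au_def by auto
  have f0: "finite (A0 Mvw bu i)" unfolding A0_def Au_def by auto
  have g2: "gR^2 > 0" using g by simp
  have goal: "c \<ge> 0 \<and> (\<sigma> k < n \<longrightarrow> c * (rowsum Mvz k + 1/gR^2) \<le> 1)
     \<and> (\<not> \<sigma> k < n \<longrightarrow> c * rowsum Mvz k \<le> 1)"
  proof (cases "A1 Mvw bu i = {}")
    case True
    have nk: "\<not> \<sigma> k < n" using True m1 by auto
    define R0 where "R0 = Max (rowsum Mvz ` A0 Mvw bu i)"
    have R0p: "R0 > 0" using R0 True unfolding R0_def i_def by auto
    have "gamma gR Mvz Mvw bu a i = sqrt (1 / (a * R0))"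
      using True unfolding gamma_def R0_def by simp
    hence c: "c = 1 / R0" using a R0p unfolding c_def by simp
    have "rowsum Mvz k \<le> R0" unfolding R0_def using f0 m0 nk by (intro Max_ge) auto
    hence "c * rowsum Mvz k \<le> 1" using c R0p rowsum_nn[of Mvz k] by (simp add: divide_le_eq)
    then show ?thesis using nk c R0p by simp
  next
    case False
    define R1 where "R1 = Max (rowsum Mvz ` A1 Mvw bu i)"
    define e1 where "e1 = gR^2 / (R1 * gR^2 + 1)"
    define R0 where "R0 = Max (rowsum Mvz ` A0 Mvw bu i)"
    obtain x where x: "x \<in> A1 Mvw bu i" using False by auto
    have "rowsum Mvz x \<le> R1" unfolding R1_def using f1 x by (intro Max_ge) auto
    hence R1nn: "R1 \<ge> 0" using rowsum_nn[of Mvz x] by linarith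
    have dpos: "R1 * gR^2 + 1 > 0" using mult_nonneg_nonneg[OF R1nn, of "gR^2"] by simp
    have e1p: "e1 > 0" unfolding e1_def using dpos g2 by (intro divide_pos_pos) auto
    have rr: "R1 + 1/gR^2 = (R1*gR^2+1)/gR^2" using g2 by (simp add: field_simps)
    have e1R: "e1 * (R1 + 1/gR^2) = 1" unfolding e1_def rr using dpos g2 by simp
    have caseA1: "c * (rowsum Mvz k + 1/gR^2) \<le> 1" if "\<sigma> k < n" "0 \<le> c" "c \<le> e1"
    proof -
      have "rowsum Mvz k \<le> R1" unfolding R1_def using f1 m1 that(1) by (intro Max_ge) auto
      hence "c * (rowsum Mvz k + 1/gR^2) \<le> e1 * (R1 + 1/gR^2)"
        using that rowsum_nn[of Mvz k] g2 by (intro mult_mono) auto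
      then show ?thesis using e1R by simp
    qed
    show ?thesis
    proof (cases "A0 Mvw bu i = {} \<or> R0 = 0")
      case True
      have "gamma gR Mvz Mvw bu a i = sqrt (e1 / a)"
        using True False unfolding gamma_def R0_def e1_def R1_def Let_def by auto
      hence c: "c = e1" using a e1p unfolding c_def by simp
      have "c * rowsum Mvz k \<le> 1" if nk: "\<not> \<sigma> k < n"
      proof -
        have "rowsum Mvz k \<le> R0" unfolding R0_def using f0 m0 nk by (intro Max_ge) auto
        moreover have "R0 = 0" using True m0 nk by auto
        ultimately have "rowsum Mvz k = 0" using rowsum_nn[of Mvz k] by linarith
        then show ?thesis by simp
      qed
      then show ?thesis using caseA1 c e1p by auto
    next
      case F2: False
      obtain y where y: "y \<in> A0 Mvw bu i" using F2 by auto
      have "rowsum Mvz y \<le> R0" unfolding R0_def using f0 y by (intro Max_ge) auto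
      hence R0p: "R0 > 0" using rowsum_nn[of Mvz y] F2 by linarith
      have "gamma gR Mvz Mvw bu a i = sqrt (min e1 (1 / R0) / a)"
        using F2 False unfolding gamma_def R0_def e1_def R1_def Let_def by auto
      hence c: "c = min e1 (1 / R0)" using a e1p R0p unfolding c_def by simp
      have "c * rowsum Mvz k \<le> 1" if nk: "\<not> \<sigma> k < n"
      proof -
        have "rowsum Mvz k \<le> R0" unfolding R0_def using f0 m0 nk by (intro Max_ge) auto
        hence "c * rowsum Mvz k \<le> (1/R0) * R0"
          using c R0p e1p rowsum_nn[of Mvz k] by (intro mult_mono) auto
        then show ?thesis using R0p by simp
      qed
      then show ?thesis using caseA1 c e1p R0p by auto
    qed
  qed
  then show ?thesis unfolding c_def i_def by simp
qed

lemma outer_carrier: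
  assumes "Mvz \<in> carrier_mat q r" "Mvw \<in> carrier_mat q n" "Muz \<in> carrier_mat m r"
  shows "outer_mat Mvz Mvw Muz \<in> carrier_mat (q+r+n+m) (r+n)"
  using assms unfolding outer_mat_def Let_def by auto

lemma outer_entry:
  assumes "Mvz \<in> carrier_mat q r" "Mvw \<in> carrier_mat q n" "Muz \<in> carrier_mat m r"
    "a < q+r+n+m" "c < r+n"
  shows "outer_mat Mvz Mvw Muz $$ (a,c) =
       (if a < q then (if c < r then Mvz $$ (a,c) else Mvw $$ (a, c - r))
       else if a < q + r then (if c = a - q then 1 else 0)
       else if a < q + r + n then (if c \<ge> r \<and> c - r = a - q - r then 1 else 0)
       else (if c < r then Muz $$ (a - q - r - n, c) else 0))"
  using assms unfolding outer_mat_def Let_def by auto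

lemma outer_mv:
  assumes d: "Mvz \<in> carrier_mat q r" "Mvw \<in> carrier_mat q n" "Muz \<in> carrier_mat m r"
    and x: "x \<in> carrier_vec (r+n)" and a: "a < q+r+n+m"
  shows "(outer_mat Mvz Mvw Muz *\<^sub>v x) $ a = (\<Sum>c<r+n. outer_mat Mvz Mvw Muz $$ (a,c) * x $ c)"
proof -
  have "(outer_mat Mvz Mvw Muz *\<^sub>v x) $ a = row (outer_mat Mvz Mvw Muz) a \<bullet> x"
    using outer_carrier[OF d] a by simp
  also have "\<dots> = (\<Sum>c<r+n. outer_mat Mvz Mvw Muz $$ (a,c) * x $ c)"
    using outer_carrier[OF d] a x by (simp add: scalar_prod_def atLeast0LessThan)
  finally show ?thesis .
qed

lemma outer_idx:
  assumes d: "Mvz \<in> carrier_mat q r" "Mvw \<in> carrier_mat q n" "Muz \<in> carrier_mat m r"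
    and x: "x \<in> carrier_vec (r+n)"
  defines "z \<equiv> vec r (\<lambda>j. x $ j)" and "w \<equiv> vec n (\<lambda>l. x $ (r+l))"
  shows "a < q \<Longrightarrow> (outer_mat Mvz Mvw Muz *\<^sub>v x) $ a = (Mvz *\<^sub>v z + Mvw *\<^sub>v w) $ a"
    and "j < r \<Longrightarrow> (outer_mat Mvz Mvw Muz *\<^sub>v x) $ (q+j) = z $ j"
    and "l < n \<Longrightarrow> (outer_mat Mvz Mvw Muz *\<^sub>v x) $ (q+r+l) = w $ l"
    and "b < m \<Longrightarrow> (outer_mat Mvz Mvw Muz *\<^sub>v x) $ (q+r+n+b) = (Muz *\<^sub>v z) $ b"
proof -
  let ?O = "outer_mat Mvz Mvw Muz"
  have zc: "z \<in> carrier_vec r" and wc: "w \<in> carrier_vec n" unfolding z_def w_def by auto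
  show "(?O *\<^sub>v x) $ a = (Mvz *\<^sub>v z + Mvw *\<^sub>v w) $ a" if a: "a < q"
  proof -
    have "(?O *\<^sub>v x) $ a = (\<Sum>c<r+n. ?O $$ (a,c) * x $ c)"
      using outer_mv[OF d x] a by simp
    also have "\<dots> = (\<Sum>c<r. ?O $$ (a,c) * x $ c) + (\<Sum>l<n. ?O $$ (a,r+l) * x $ (r+l))"
      by (rule sum_split_add)
    also have "(\<Sum>c<r. ?O $$ (a,c) * x $ c) = (\<Sum>c<r. Mvz $$ (a,c) * z $ c)"
      using outer_entry[OF d] a unfolding z_def by (intro sum.cong) auto
    also have "(\<Sum>l<n. ?O $$ (a,r+l) * x $ (r+l)) = (\<Sum>l<n. Mvw $$ (a,l) * w $ l)"
      using outer_entry[OF d] a unfolding w_def by (intro sum.cong) auto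
    finally show ?thesis
      using d a zc wc by (simp add: scalar_prod_def atLeast0LessThan)
  qed
  show "(?O *\<^sub>v x) $ (q+j) = z $ j" if j: "j < r"
  proof -
    have "(?O *\<^sub>v x) $ (q+j) = (\<Sum>c<r+n. ?O $$ (q+j,c) * x $ c)"
      using outer_mv[OF d x] j by simp
    also have "\<dots> = (\<Sum>c<r+n. if c = j then x $ c else 0)"
      using outer_entry[OF d] j by (intro sum.cong) auto
    also have "\<dots> = x $ j" using j by (simp add: sum.delta')
    finally show ?thesis using j unfolding z_def by simp
  qed
  show "(?O *\<^sub>v x) $ (q+r+l) = w $ l" if l: "l < n"
  proof -
    have "(?O *\<^sub>v x) $ (q+r+l) = (\<Sum>c<r+n. ?O $$ (q+r+l,c) * x $ c)"
      using outer_mv[OF d x] l by simp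
    also have "\<dots> = (\<Sum>c<r+n. if c = r+l then x $ c else 0)"
      using outer_entry[OF d] l by (intro sum.cong) auto
    also have "\<dots> = x $ (r+l)" using l by (simp add: sum.delta')
    finally show ?thesis using l unfolding w_def by simp
  qed
  show "(?O *\<^sub>v x) $ (q+r+n+b) = (Muz *\<^sub>v z) $ b" if b: "b < m"
  proof -
    have "(?O *\<^sub>v x) $ (q+r+n+b) = (\<Sum>c<r+n. ?O $$ (q+r+n+b,c) * x $ c)"
      using outer_mv[OF d x] b by simp
    also have "\<dots> = (\<Sum>c<r. ?O $$ (q+r+n+b,c) * x $ c) + (\<Sum>l<n. ?O $$ (q+r+n+b,r+l) * x $ (r+l))"
      by (rule sum_split_add)
    also have "(\<Sum>c<r. ?O $$ (q+r+n+b,c) * x $ c) = (\<Sum>c<r. Muz $$ (b,c) * z $ c)"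
      using outer_entry[OF d] b unfolding z_def by (intro sum.cong) auto
    also have "(\<Sum>l<n. ?O $$ (q+r+n+b,r+l) * x $ (r+l)) = 0"
      using outer_entry[OF d] b by (intro sum.neutral) auto
    finally show ?thesis
      using d b zc by (simp add: scalar_prod_def atLeast0LessThan)
  qed
qed

lemma inner_carrier: "inner_mat q r n m bu bz al ga gR \<in> carrier_mat (q+r+n+m) (q+r+n+m)"
  unfolding inner_mat_def diag_mat_def by auto

lemma diag_mv:
  assumes "y \<in> carrier_vec d" "a < d"
  shows "(diag_mat d dg *\<^sub>v y) $ a = dg a * y $ a"
proof -
  have "(diag_mat d dg *\<^sub>v y) $ a = (\<Sum>c\<in>{0..<d}. (if a = c then dg a else 0) * y $ c)"
    using assms by (simp add: diag_mat_def scalar_prod_def)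
  also have "\<dots> = (\<Sum>c\<in>{0..<d}. if a = c then dg a * y $ c else 0)"
    by (intro sum.cong) auto
  also have "\<dots> = dg a * y $ a" using assms by (simp add: sum.delta)
  finally show ?thesis .
qed

lemma diag_quad:
  assumes "y \<in> carrier_vec d"
  shows "y \<bullet> (diag_mat d dg *\<^sub>v y) = (\<Sum>a<d. dg a * (y $ a)^2)"
proof -
  have "y \<bullet> (diag_mat d dg *\<^sub>v y) = (\<Sum>a\<in>{0..<d}. y $ a * (diag_mat d dg *\<^sub>v y) $ a)"
    by (simp add: scalar_prod_def diag_mat_def)
  also have "\<dots> = (\<Sum>a<d. dg a * (y $ a)^2)"
    using diag_mv[OF assms] by (auto simp: atLeast0LessThan power2_eq_square intro!: sum.cong)
  finally show ?thesis .
qed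

lemma quad_form:
  assumes d: "Mvz \<in> carrier_mat q r" "Mvw \<in> carrier_mat q n" "Muz \<in> carrier_mat m r"
    and x: "x \<in> carrier_vec (r+n)"
  defines "z \<equiv> vec r (\<lambda>j. x $ j)" and "w \<equiv> vec n (\<lambda>l. x $ (r+l))"
  shows "x \<bullet> ((transpose_mat (outer_mat Mvz Mvw Muz) * inner_mat q r n m bu bz al ga gR
             * outer_mat Mvz Mvw Muz) *\<^sub>v x)
     = (\<Sum>k<q. al (bu k) * (ga (bu k))^2 * ((Mvz *\<^sub>v z + Mvw *\<^sub>v w) $ k)^2)
       - (\<Sum>j<r. al (bz j) * (z $ j)^2) - gR^2 * (w \<bullet> w) + (Muz *\<^sub>v z) \<bullet> (Muz *\<^sub>v z)"
proof -
  let ?O = "outer_mat Mvz Mvw Muz" and ?D = "inner_mat q r n m bu bz al ga gR"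
  let ?N = "q+r+n+m"
  define dg where "dg a = (if a < q then al (bu a) * (ga (bu a))\<^sup>2
       else if a < q + r then - al (bz (a - q))
       else if a < q + r + n then - gR\<^sup>2
       else 1)" for a
  have Dd: "?D = diag_mat ?N dg" unfolding inner_mat_def dg_def by simp
  have Oc: "?O \<in> carrier_mat ?N (r+n)" by (rule outer_carrier[OF d])
  have Dc: "?D \<in> carrier_mat ?N ?N" by (rule inner_carrier)
  have Otc: "transpose_mat ?O \<in> carrier_mat (r+n) ?N" using Oc by simp
  define y where "y = ?O *\<^sub>v x"
  have yc: "y \<in> carrier_vec ?N" unfolding y_def using Oc x by simp
  have uc: "?D *\<^sub>v y \<in> carrier_vec ?N" using Dc yc by simp
  have "(transpose_mat ?O * ?D * ?O) *\<^sub>v x = (transpose_mat ?O * ?D) *\<^sub>v y"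
    unfolding y_def using Otc Dc Oc x by (intro assoc_mult_mat_vec) auto
  also have "\<dots> = transpose_mat ?O *\<^sub>v (?D *\<^sub>v y)"
    using Otc Dc yc by (intro assoc_mult_mat_vec) auto
  finally have 1: "(transpose_mat ?O * ?D * ?O) *\<^sub>v x = transpose_mat ?O *\<^sub>v (?D *\<^sub>v y)" .
  have "x \<bullet> (transpose_mat ?O *\<^sub>v (?D *\<^sub>v y)) = (transpose_mat ?O *\<^sub>v (?D *\<^sub>v y)) \<bullet> x"
    using x Otc uc by (intro comm_scalar_prod) auto
  also have "\<dots> = (?D *\<^sub>v y) \<bullet> y" unfolding y_def
    by (rule transpose_vec_mult_scalar[OF Oc x uc[unfolded y_def]])
  also have "\<dots> = y \<bullet> (?D *\<^sub>v y)" using uc yc by (intro comm_scalar_prod) auto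
  also have "\<dots> = (\<Sum>a<?N. dg a * (y $ a)^2)" unfolding Dd by (rule diag_quad[OF yc])
  also have "\<dots> = (\<Sum>a<q. dg a * (y $ a)^2) + (\<Sum>j<r. dg (q+j) * (y $ (q+j))^2)
      + (\<Sum>l<n. dg (q+r+l) * (y $ (q+r+l))^2) + (\<Sum>b<m. dg (q+r+n+b) * (y $ (q+r+n+b))^2)"
    by (simp only: sum_split_add)
  also have "(\<Sum>a<q. dg a * (y $ a)^2)
      = (\<Sum>k<q. al (bu k) * (ga (bu k))^2 * ((Mvz *\<^sub>v z + Mvw *\<^sub>v w) $ k)^2)"
    unfolding y_def z_def w_def using outer_idx(1)[OF d x] by (intro sum.cong) (auto simp: dg_def)
  also have "(\<Sum>j<r. dg (q+j) * (y $ (q+j))^2) = - (\<Sum>j<r. al (bz j) * (z $ j)^2)"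
    unfolding y_def z_def using outer_idx(2)[OF d x]
    by (auto simp: dg_def sum_negf[symmetric] intro!: sum.cong)
  also have "(\<Sum>l<n. dg (q+r+l) * (y $ (q+r+l))^2) = - (gR^2 * (w \<bullet> w))"
  proof -
    have "(\<Sum>l<n. dg (q+r+l) * (y $ (q+r+l))^2) = (\<Sum>l<n. (- (gR^2)) * (w $ l * w $ l))"
      unfolding y_def w_def using outer_idx(3)[OF d x]
      by (auto simp: dg_def power2_eq_square intro!: sum.cong)
    also have "\<dots> = - (gR^2 * (w \<bullet> w))"
      by (simp add: scalar_prod_def w_def sum_distrib_left atLeast0LessThan sum_negf)
    finally show ?thesis .
  qed
  also have "(\<Sum>b<m. dg (q+r+n+b) * (y $ (q+r+n+b))^2) = (Muz *\<^sub>v z) \<bullet> (Muz *\<^sub>v z)"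
  proof -
    have "(\<Sum>b<m. dg (q+r+n+b) * (y $ (q+r+n+b))^2) = (\<Sum>b<m. (Muz *\<^sub>v z) $ b * (Muz *\<^sub>v z) $ b)"
      unfolding y_def z_def using outer_idx(4)[OF d x]
      by (auto simp: dg_def power2_eq_square intro!: sum.cong)
    also have "\<dots> = (Muz *\<^sub>v z) \<bullet> (Muz *\<^sub>v z)"
      using d by (simp add: scalar_prod_def atLeast0LessThan)
    finally show ?thesis .
  qed
  finally show ?thesis using 1 by simp
qed

lemma sigma_ex:
  fixes Mvw :: "real mat"
  assumes W: "Mvw \<in> carrier_mat q n"
    and E: "\<exists>C. perm_mat C q \<and> C * Mvw = mat q n (\<lambda>(a,c). if a = c then 1 else 0)"
  shows "\<exists>\<sigma>. \<sigma> permutes {..<q} \<and> (\<forall>k<q. \<forall>l<n. Mvw $$ (k,l) = (if \<sigma> k = l then 1 else 0))"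
proof -
  obtain C \<pi> where C: "C \<in> carrier_mat q q" and pi: "\<pi> permutes {..<q}"
    and Cv: "\<forall>a<q. \<forall>c<q. C $$ (a,c) = (if c = \<pi> a then 1 else 0)"
    and CE: "C * Mvw = mat q n (\<lambda>(a,c). if a = c then 1 else 0)"
    using E unfolding perm_mat_def by blast
  have ent: "Mvw $$ (\<pi> a, l) = (if a = l then 1 else 0)" if a: "a < q" and l: "l < n" for a l
  proof -
    have pa: "\<pi> a < q" using permutes_in_image[OF pi, of a] a by simp
    have "(C * Mvw) $$ (a,l) = (\<Sum>c\<in>{0..<q}. C $$ (a,c) * Mvw $$ (c,l))"
      using C W a l by (simp add: scalar_prod_def)
    also have "\<dots> = (\<Sum>c\<in>{0..<q}. if \<pi> a = c then Mvw $$ (c,l) else 0)"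
      using Cv a by (intro sum.cong) auto
    also have "\<dots> = Mvw $$ (\<pi> a, l)" using pa by (simp add: sum.delta)
    finally have "(C * Mvw) $$ (a,l) = Mvw $$ (\<pi> a, l)" .
    moreover have "(C * Mvw) $$ (a,l) = (if a = l then 1 else 0)" using CE a l by simp
    ultimately show ?thesis by simp
  qed
  have "\<forall>k<q. \<forall>l<n. Mvw $$ (k,l) = (if Hilbert_Choice.inv \<pi> k = l then 1 else 0)"
  proof (intro allI impI)
    fix k l assume k: "k < q" and l: "l < n"
    have ik: "Hilbert_Choice.inv \<pi> k < q" using permutes_in_image[OF permutes_inv[OF pi], of k] k by simp
    have "Mvw $$ (\<pi> (Hilbert_Choice.inv \<pi> k), l) = (if Hilbert_Choice.inv \<pi> k = l then 1 else 0)" by (rule ent[OF ik l])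
    then show "Mvw $$ (k,l) = (if Hilbert_Choice.inv \<pi> k = l then 1 else 0)"
      using permutes_inverses(1)[OF pi, of k] by simp
  qed
  then show ?thesis using permutes_inv[OF pi] by blast
qed

lemma self_scalar_nonneg: "(v :: real vec) \<bullet> v \<ge> 0"
  unfolding scalar_prod_def by (rule sum_nonneg) simp

lemma muz_quad:
  fixes Muz :: "real mat"
  assumes M: "Muz \<in> carrier_mat m r" and H: "transpose_mat Muz * Muz = diag_mat r h"
    and z: "z \<in> carrier_vec r"
  shows "(Muz *\<^sub>v z) \<bullet> (Muz *\<^sub>v z) = (\<Sum>j<r. h j * (z $ j)^2)"
proof -
  have mz: "Muz *\<^sub>v z \<in> carrier_vec m" using M z by simp
  have 1: "(Muz *\<^sub>v z) \<bullet> (Muz *\<^sub>v z) = (transpose_mat Muz *\<^sub>v (Muz *\<^sub>v z)) \<bullet> z"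
    by (rule transpose_vec_mult_scalar[OF M z mz, symmetric])
  have 2: "transpose_mat Muz *\<^sub>v (Muz *\<^sub>v z) = (transpose_mat Muz * Muz) *\<^sub>v z"
    by (rule assoc_mult_mat_vec[symmetric, of "transpose_mat Muz" r m Muz r z]) (use M z in auto)
  have 3: "(diag_mat r h *\<^sub>v z) \<bullet> z = z \<bullet> (diag_mat r h *\<^sub>v z)"
  proof -
    have dc: "diag_mat r h \<in> carrier_mat r r" by (simp add: diag_mat_def)
    show ?thesis by (rule comm_scalar_prod[OF mult_mat_vec_carrier[OF dc z] z])
  qed
  have 4: "z \<bullet> (diag_mat r h *\<^sub>v z) = (\<Sum>j<r. h j * (z $ j)^2)" by (fact diag_quad[OF z, of h])
  show ?thesis unfolding 1 2 H 3 4 ..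
qed

lemma h_nonneg:
  fixes Muz :: "real mat"
  assumes M: "Muz \<in> carrier_mat m r" and H: "transpose_mat Muz * Muz = diag_mat r h"
    and j: "j < r"
  shows "h j \<ge> 0"
proof -
  have "h j = (transpose_mat Muz * Muz) $$ (j,j)" unfolding H using j by (simp add: diag_mat_def)
  also have "\<dots> = col Muz j \<bullet> col Muz j" using M j by simp
  finally show ?thesis using self_scalar_nonneg by simp
qed

lemma alpha_ge:
  fixes Mvz :: "real mat"
  assumes "Mvz \<in> carrier_mat q r" "j < r"
  shows "alpha Mvz h bz b (bz j) \<ge> h j + colsum Mvz j"
proof -
  have jA: "j \<in> Az bz (dim_col Mvz) (bz j)" using assms unfolding Az_def by auto
  have fA: "finite (Az bz (dim_col Mvz) (bz j))" unfolding Az_def by auto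
  have "h j \<le> Max (h ` Az bz (dim_col Mvz) (bz j))" using jA fA by (intro Max_ge) auto
  moreover have "colsum Mvz j \<le> Max (colsum Mvz ` Az bz (dim_col Mvz) (bz j))"
    using jA fA by (intro Max_ge) auto
  ultimately show ?thesis unfolding alpha_def using zero_le_power2[of "b (bz j)"] by linarith
qed

lemma group_Au: "\<forall>k<q. bu k < N \<Longrightarrow> (\<Sum>i<N. \<Sum>k\<in>Au bu q i. f k) = (\<Sum>k<q. (f k :: real))"
proof -
  assume a: "\<forall>k<q. bu k < N"
  have "Au bu q i = {k \<in> {..<q}. bu k = i}" for i unfolding Au_def by auto
  moreover have "(\<Sum>i\<in>{..<N}. \<Sum>k\<in>{k \<in> {..<q}. bu k = i}. f k) = (\<Sum>k\<in>{..<q}. f k)"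
    by (rule sum.group) (use a in auto)
  ultimately show ?thesis by simp
qed

lemma group_Az: "\<forall>k<q. bu k < N \<Longrightarrow> (\<Sum>i<N. \<Sum>k\<in>Az bu q i. f k) = (\<Sum>k<q. (f k :: real))"
  using group_Au[of q bu N f] unfolding Au_def Az_def by simp

theorem theorem1:
  fixes N q r n m :: nat
    and Mvz Mvw Muz :: "real mat"
    and bu bz :: "nat \<Rightarrow> nat"
    and h b :: "nat \<Rightarrow> real"
    and gR :: real
    and \<rho> :: "nat \<Rightarrow> 'x \<Rightarrow> real vec \<Rightarrow> 'x"
    and \<chi> :: "nat \<Rightarrow> 'x \<Rightarrow> real vec \<Rightarrow> real vec"
    and V :: "nat \<Rightarrow> 'x \<Rightarrow> real"
  assumes dims: "Mvz \<in> carrier_mat q r" "Mvw \<in> carrier_mat q n" "Muz \<in> carrier_mat m r"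
    and part_u: "\<forall>k<q. bu k < N" and part_z: "\<forall>j<r. bz j < N"
    and ne_u: "\<forall>i<N. Au bu q i \<noteq> {}" and ne_z: "\<forall>i<N. Az bz r i \<noteq> {}"
    and A2a: "n \<le> q" "\<exists>C. perm_mat C q \<and> C * Mvw = mat q n (\<lambda>(a,c). if a = c then 1 else 0)"
    and A2b: "transpose_mat Muz * Muz = diag_mat r h"
    and gR_pos: "gR > 0"
    and alpha_pos: "\<forall>i<N. alpha Mvz h bz b i > 0"
    and R0_pos: "\<forall>i<N. A1 Mvw bu i = {} \<longrightarrow> Max (rowsum Mvz ` A0 Mvw bu i) > 0"
    and storage_nonneg: "\<forall>i<N. \<forall>x. V i x \<ge> 0"
    and dissip: "\<forall>i<N. \<forall>x. \<forall>vv \<in> carrier_vec q.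
        V i (\<rho> i x (mask bu i vv)) - V i x
          \<le> (gamma gR Mvz Mvw bu (alpha Mvz h bz b i) i)\<^sup>2 * (\<Sum>k\<in>Au bu q i. (vv $ k)\<^sup>2)
            - (\<Sum>j\<in>Az bz r i. (\<chi> i x (mask bu i vv) $ j)\<^sup>2)"
  shows "neg_semidef
           (transpose_mat (outer_mat Mvz Mvw Muz)
            * inner_mat q r n m bu bz (alpha Mvz h bz b)
                (\<lambda>i. gamma gR Mvz Mvw bu (alpha Mvz h bz b i) i) gR
            * outer_mat Mvz Mvw Muz)
       \<and> (\<exists>W :: (nat \<Rightarrow> 'x) \<Rightarrow> real. (\<forall>s. W s \<ge> 0) \<and>
            (\<forall>\<xi> v z w u. is_traj N Mvz Mvw Muz bu bz \<rho> \<chi> \<xi> v z w u \<longrightarrow>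
               (\<forall>t. W (\<xi> (Suc t)) - W (\<xi> t) \<le> gR\<^sup>2 * (w t \<bullet> w t) - u t \<bullet> u t)))
       \<and> (\<forall>\<xi> v z w u. is_traj N Mvz Mvw Muz bu bz \<rho> \<chi> \<xi> v z w u \<longrightarrow>
            summable (\<lambda>t. w t \<bullet> w t) \<longrightarrow> summable (\<lambda>t. u t \<bullet> u t))"
proof -
  obtain \<sigma> where sig: "\<sigma> permutes {..<q}"
    and Wf: "\<forall>k<q. \<forall>l<n. Mvw $$ (k,l) = (if \<sigma> k = l then 1 else 0)"
    using sigma_ex[OF dims(2) A2a(2)] by blast
  let ?al = "alpha Mvz h bz b"
  let ?ga = "\<lambda>i. gamma gR Mvz Mvw bu (alpha Mvz h bz b i) i"
  have cb: "\<forall>k<q. ?al (bu k) * (?ga (bu k))^2 \<ge> 0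
      \<and> (\<sigma> k < n \<longrightarrow> ?al (bu k) * (?ga (bu k))^2 * (rowsum Mvz k + 1/gR^2) \<le> 1)
      \<and> (\<not> \<sigma> k < n \<longrightarrow> ?al (bu k) * (?ga (bu k))^2 * rowsum Mvz k \<le> 1)"
  proof (intro allI impI)
    fix k assume k: "k < q"
    have bk: "bu k < N" using part_u k by auto
    have ap: "?al (bu k) > 0" using alpha_pos bk by auto
    have R0k: "A1 Mvw bu (bu k) = {} \<longrightarrow> Max (rowsum Mvz ` A0 Mvw bu (bu k)) > 0"
      using R0_pos bk by auto
    show "?al (bu k) * (?ga (bu k))^2 \<ge> 0
      \<and> (\<sigma> k < n \<longrightarrow> ?al (bu k) * (?ga (bu k))^2 * (rowsum Mvz k + 1/gR^2) \<le> 1)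
      \<and> (\<not> \<sigma> k < n \<longrightarrow> ?al (bu k) * (?ga (bu k))^2 * rowsum Mvz k \<le> 1)"
      by (rule gamma_bound[OF dims(1,2) Wf k ap gR_pos R0k])
  qed
  have core: "(\<Sum>k<q. ?al (bu k) * (?ga (bu k))^2 * ((Mvz *\<^sub>v zz + Mvw *\<^sub>v ww) $ k)^2)
       - (\<Sum>j<r. ?al (bz j) * (zz $ j)^2)
       \<le> gR^2 * (ww \<bullet> ww) - (Muz *\<^sub>v zz) \<bullet> (Muz *\<^sub>v zz)"
    if zz: "zz \<in> carrier_vec r" and ww: "ww \<in> carrier_vec n" for zz ww
  proof -
    have 1: "(\<Sum>k<q. ?al (bu k) * (?ga (bu k))^2 * ((Mvz *\<^sub>v zz + Mvw *\<^sub>v ww) $ k)^2)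
        \<le> (\<Sum>j<r. colsum Mvz j * (zz $ j)^2) + gR^2 * (ww \<bullet> ww)"
      by (rule key_sum[OF dims(1,2) zz ww sig A2a(1) Wf gR_pos, where c = "\<lambda>k. ?al (bu k) * (?ga (bu k))^2", OF cb])
    have 2: "(\<Sum>j<r. colsum Mvz j * (zz $ j)^2) + (Muz *\<^sub>v zz) \<bullet> (Muz *\<^sub>v zz)
        \<le> (\<Sum>j<r. ?al (bz j) * (zz $ j)^2)"
    proof -
      have "(\<Sum>j<r. colsum Mvz j * (zz $ j)^2) + (Muz *\<^sub>v zz) \<bullet> (Muz *\<^sub>v zz)
          = (\<Sum>j<r. (h j + colsum Mvz j) * (zz $ j)^2)"
        unfolding muz_quad[OF dims(3) A2b zz] by (simp add: sum.distrib[symmetric] algebra_simps)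
      also have "\<dots> \<le> (\<Sum>j<r. ?al (bz j) * (zz $ j)^2)"
      proof (rule sum_mono)
        fix j assume "j \<in> {..<r}"
        hence j: "j < r" by simp
        show "(h j + colsum Mvz j) * (zz $ j)^2 \<le> ?al (bz j) * (zz $ j)^2"
          by (rule mult_right_mono[OF alpha_ge[OF dims(1) j] zero_le_power2])
      qed
      finally show ?thesis .
    qed
    show ?thesis using 1 2 by linarith
  qed
  let ?M = "transpose_mat (outer_mat Mvz Mvw Muz) * inner_mat q r n m bu bz ?al ?ga gR
            * outer_mat Mvz Mvw Muz"
  have Mc: "?M \<in> carrier_mat (r+n) (r+n)"
    by (rule mult_carrier_mat[OF mult_carrier_mat[OF transpose_carrier_mat[THEN iffD2, OF outer_carrier[OF dims]] inner_carrier] outer_carrier[OF dims]])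
  have dM: "dim_row ?M = r+n" using Mc by (rule carrier_matD(1))
  have P1: "neg_semidef ?M"
    unfolding neg_semidef_def
  proof (intro conjI ballI)
    show "?M \<in> carrier_mat (dim_row ?M) (dim_row ?M)" unfolding dM by (rule Mc)
    fix x :: "real vec" assume "x \<in> carrier_vec (dim_row ?M)"
    then have x: "x \<in> carrier_vec (r+n)" unfolding dM .
    have zc: "vec r (\<lambda>j. x $ j) \<in> carrier_vec r" by simp
    have wc: "vec n (\<lambda>l. x $ (r+l)) \<in> carrier_vec n" by simp
    have qf: "x \<bullet> (?M *\<^sub>v x)
     = (\<Sum>k<q. ?al (bu k) * (?ga (bu k))^2 * ((Mvz *\<^sub>v vec r (\<lambda>j. x $ j) + Mvw *\<^sub>v vec n (\<lambda>l. x $ (r+l))) $ k)^2)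
       - (\<Sum>j<r. ?al (bz j) * (vec r (\<lambda>j. x $ j) $ j)^2) - gR^2 * (vec n (\<lambda>l. x $ (r+l)) \<bullet> vec n (\<lambda>l. x $ (r+l)))
       + (Muz *\<^sub>v vec r (\<lambda>j. x $ j)) \<bullet> (Muz *\<^sub>v vec r (\<lambda>j. x $ j))"
      by (rule quad_form[OF dims x, where al = "?al" and ga = "?ga" and bu = bu and bz = bz and gR = gR])
    show "x \<bullet> (?M *\<^sub>v x) \<le> 0" using qf core[OF zc wc] by linarith
  qed
  define W where "W = (\<lambda>s :: nat \<Rightarrow> 'x. \<Sum>i<N. ?al i * V i (s i))"
  have Wnn: "\<forall>s. W s \<ge> 0"
    unfolding W_def using alpha_pos storage_nonneg by (auto intro!: sum_nonneg)
  have Wd: "\<forall>\<xi> v z w u. is_traj N Mvz Mvw Muz bu bz \<rho> \<chi> \<xi> v z w u \<longrightarrow>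
               (\<forall>t. W (\<xi> (Suc t)) - W (\<xi> t) \<le> gR\<^sup>2 * (w t \<bullet> w t) - u t \<bullet> u t)"
  proof (intro allI impI)
    fix \<xi> v z w u t assume tr: "is_traj N Mvz Mvw Muz bu bz \<rho> \<chi> \<xi> v z w u"
    have dd: "dim_row Mvz = q" "dim_col Mvz = r" "dim_col Mvw = n" "dim_row Muz = m" using dims by auto
    have vt: "v t \<in> carrier_vec q" and zt: "z t \<in> carrier_vec r" and wt: "w t \<in> carrier_vec n"
      and veq: "v t = Mvz *\<^sub>v z t + Mvw *\<^sub>v w t" and ueq: "u t = Muz *\<^sub>v z t"
      and stp: "\<forall>i<N. \<xi> (Suc t) i = \<rho> i (\<xi> t i) (mask bu i (v t))"
      and zch: "\<forall>j<r. z t $ j = \<chi> (bz j) (\<xi> t (bz j)) (mask bu (bz j) (v t)) $ j"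
      using tr unfolding is_traj_def dd by blast+
    have per: "?al i * (V i (\<xi> (Suc t) i) - V i (\<xi> t i))
        \<le> ?al i * ((?ga i)^2 * (\<Sum>k\<in>Au bu q i. (v t $ k)^2) - (\<Sum>j\<in>Az bz r i. (z t $ j)^2))"
      if i: "i < N" for i
    proof -
      have zz: "(\<Sum>j\<in>Az bz r i. (\<chi> i (\<xi> t i) (mask bu i (v t)) $ j)^2) = (\<Sum>j\<in>Az bz r i. (z t $ j)^2)"
        using zch by (intro sum.cong) (auto simp: Az_def)
      have "V i (\<rho> i (\<xi> t i) (mask bu i (v t))) - V i (\<xi> t i)
          \<le> (?ga i)^2 * (\<Sum>k\<in>Au bu q i. (v t $ k)^2)
            - (\<Sum>j\<in>Az bz r i. (\<chi> i (\<xi> t i) (mask bu i (v t)) $ j)^2)"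
        using dissip i vt by blast
      hence "V i (\<xi> (Suc t) i) - V i (\<xi> t i)
          \<le> (?ga i)^2 * (\<Sum>k\<in>Au bu q i. (v t $ k)^2) - (\<Sum>j\<in>Az bz r i. (z t $ j)^2)"
        using stp i zz by simp
      moreover have "?al i \<ge> 0" using alpha_pos i by (simp add: less_imp_le)
      ultimately show ?thesis by (rule mult_left_mono)
    qed
    have eqi: "?al i * ((?ga i)^2 * (\<Sum>k\<in>Au bu q i. (v t $ k)^2) - (\<Sum>j\<in>Az bz r i. (z t $ j)^2))
        = (\<Sum>k\<in>Au bu q i. ?al (bu k) * (?ga (bu k))^2 * (v t $ k)^2)
          - (\<Sum>j\<in>Az bz r i. ?al (bz j) * (z t $ j)^2)" for i
    proof -
      have a: "(\<Sum>k\<in>Au bu q i. ?al (bu k) * (?ga (bu k))^2 * (v t $ k)^2)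
          = (\<Sum>k\<in>Au bu q i. ?al i * (?ga i)^2 * (v t $ k)^2)"
        by (rule sum.cong) (auto simp: Au_def)
      have b: "(\<Sum>j\<in>Az bz r i. ?al (bz j) * (z t $ j)^2) = (\<Sum>j\<in>Az bz r i. ?al i * (z t $ j)^2)"
        by (rule sum.cong) (auto simp: Az_def)
      show ?thesis unfolding a b by (simp add: sum_distrib_left right_diff_distrib mult.assoc)
    qed
    have "W (\<xi> (Suc t)) - W (\<xi> t) = (\<Sum>i<N. ?al i * (V i (\<xi> (Suc t) i) - V i (\<xi> t i)))"
      unfolding W_def by (simp add: sum_subtractf right_diff_distrib)
    also have "\<dots> \<le> (\<Sum>i<N. ?al i * ((?ga i)^2 * (\<Sum>k\<in>Au bu q i. (v t $ k)^2) - (\<Sum>j\<in>Az bz r i. (z t $ j)^2)))"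
      by (rule sum_mono) (use per in auto)
    also have "\<dots> = (\<Sum>i<N. \<Sum>k\<in>Au bu q i. ?al (bu k) * (?ga (bu k))^2 * (v t $ k)^2)
          - (\<Sum>i<N. \<Sum>j\<in>Az bz r i. ?al (bz j) * (z t $ j)^2)"
      unfolding eqi by (simp add: sum_subtractf)
    also have "\<dots> = (\<Sum>k<q. ?al (bu k) * (?ga (bu k))^2 * (v t $ k)^2)
          - (\<Sum>j<r. ?al (bz j) * (z t $ j)^2)"
      unfolding group_Au[OF part_u] group_Az[OF part_z] ..
    also have "\<dots> \<le> gR\<^sup>2 * (w t \<bullet> w t) - u t \<bullet> u t"
      using core[OF zt wt] unfolding veq[symmetric] ueq[symmetric] .
    finally show "W (\<xi> (Suc t)) - W (\<xi> t) \<le> gR\<^sup>2 * (w t \<bullet> w t) - u t \<bullet> u t" .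
  qed
  have P3: "\<forall>\<xi> v z w u. is_traj N Mvz Mvw Muz bu bz \<rho> \<chi> \<xi> v z w u \<longrightarrow>
            summable (\<lambda>t. w t \<bullet> w t) \<longrightarrow> summable (\<lambda>t. u t \<bullet> u t)"
  proof (intro allI impI)
    fix \<xi> v z w u assume tr: "is_traj N Mvz Mvw Muz bu bz \<rho> \<chi> \<xi> v z w u"
      and sw: "summable (\<lambda>t. w t \<bullet> w t)"
    have d: "W (\<xi> (Suc t)) - W (\<xi> t) \<le> gR\<^sup>2 * (w t \<bullet> w t) - u t \<bullet> u t" for t
      using Wd tr by blast
    have tele: "(\<Sum>t<T. u t \<bullet> u t) \<le> gR^2 * (\<Sum>t<T. w t \<bullet> w t) + W (\<xi> 0) - W (\<xi> T)" for T
    proof (induction T)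
      case 0 show ?case by simp
    next
      case (Suc T)
      have "(\<Sum>t<Suc T. u t \<bullet> u t) = (\<Sum>t<T. u t \<bullet> u t) + u T \<bullet> u T" by simp
      moreover have "gR^2 * (\<Sum>t<Suc T. w t \<bullet> w t) = gR^2 * (\<Sum>t<T. w t \<bullet> w t) + gR^2 * (w T \<bullet> w T)"
        by (simp add: distrib_left)
      ultimately show ?case using Suc.IH d[of T] by linarith
    qed
    have bound: "(\<Sum>t<T. u t \<bullet> u t) \<le> gR^2 * suminf (\<lambda>t. w t \<bullet> w t) + W (\<xi> 0)" for T
    proof -
      have "(\<Sum>t<T. w t \<bullet> w t) \<le> suminf (\<lambda>t. w t \<bullet> w t)"
        by (rule sum_le_suminf[OF sw]) (auto simp: self_scalar_nonneg)
      hence "gR^2 * (\<Sum>t<T. w t \<bullet> w t) \<le> gR^2 * suminf (\<lambda>t. w t \<bullet> w t)"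
        by (rule mult_left_mono) simp
      moreover have "W (\<xi> T) \<ge> 0" using Wnn by blast
      ultimately show ?thesis using tele[of T] by linarith
    qed
    show "summable (\<lambda>t. u t \<bullet> u t)"
      by (rule summableI_nonneg_bounded[where x = "gR^2 * suminf (\<lambda>t. w t \<bullet> w t) + W (\<xi> 0)"])
        (auto simp: self_scalar_nonneg bound)
  qed
  show ?thesis
    apply (intro conjI)
      apply (rule P1)
     apply (rule exI[of _ W])
     apply (intro conjI)
      apply (rule Wnn)
     apply (rule Wd)
    apply (rule P3)
    done
qed

end
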